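(* Let $\mathcal{F}$ and $\mathcal{G}$ be ${\rm LP}^{\rm MLN}$ programs over a finite propositional signature $\mathbf{p}$. Then $\mathcal{F}$ is strongly equivalent to $\mathcal{G}$ if and only if there is a w-expression $c$ such that for every interpretation $X\subseteq\mathbf{p}$: (1) $TW(\mathcal{F}_X) = c\times TW(\mathcal{G}_X)$ (as w-expressions), and (2) $(\overline{\mathcal{F}_X})^X$ and $(\overline{\mathcal{G}_X})^X$ are classically equivalent.
   Context: An ${\rm LP}^{\rm MLN}$ program is a finite set of weighted formulas $w:R$, where $R$ is a propositional formula over $\mathbf{p}$ (built from atoms, $\bot$, $\neg,\land,\lor,\rightarrow$) and $w$ is either a real number (a soft rule) or the symbol $\alpha$ denoting infinite weight (a hard rule). Interpretations are sets $X$ of atoms. For a program $\mathcal{F}$: $\overline{\mathcal{F}}$ is the set of formulas obtained by dropping the weights; $\mathcal{F}_X$ is the set of $w:R\in\mathcal{F}$ with $X\models R$. For a formula (or set of formulas) $F$, the reduct $F^X$ is obtained by replacing every maximal subformula of $F$ not satisfied by $X$ with $\bot$; $X$ is a stable model of a set of formulas $F$ if $X$ is a minimal (w.r.t. set inclusion) model of $F^X$. The set of soft stable models is $\mathrm{SM}[\mathcal{F}]=\{X \mid X \text{ is a stable model of } \overline{\mathcal{F}_X}\}$. A w-expression is an expression of the form $e^{c_1+c_2\alpha}$ with $c_1$ real and $c_2$ an integer; w-expressions are multiplied by adding exponents. $TW(\mathcal{F})=\exp(\sum_{w:R\in\mathcal{F}} w)$, a w-expression (soft weights summed into $c_1$,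 the number of hard rules giving $c_2$). The weight of $X$ is $W_{\mathcal{F}}(X)=TW(\mathcal{F}_X)$ if $X\in\mathrm{SM}[\mathcal{F}]$ and $0$ otherwise, and $P_{\mathcal{F}}(X)=\lim_{\alpha\to\infty} W_{\mathcal{F}}(X)/\sum_{Y\in\mathrm{SM}[\mathcal{F}]}W_{\mathcal{F}}(Y)$. Programs $\mathcal{F}$ and $\mathcal{G}$ are strongly equivalent if for every ${\rm LP}^{\rm MLN}$ program $\mathcal{H}$, $P_{\mathcal{F}\cup\mathcal{H}}(X)=P_{\mathcal{G}\cup\mathcal{H}}(X)$ for all interpretations $X$. *)

theory Defs
  imports Complex_Main "HOL-Library.Multiset"
begin

datatype 'a form =
    Atom 'a
  | Bot
  | Neg "'a form"
  | Conj "'a form" "'a form"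
  | Disj "'a form" "'a form"
  | Impl "'a form" "'a form"

fun sat :: "'a set \<Rightarrow> 'a form \<Rightarrow> bool" where
  "sat X (Atom a) = (a \<in> X)"
| "sat X Bot = False"
| "sat X (Neg f) = (\<not> sat X f)"
| "sat X (Conj f g) = (sat X f \<and> sat X g)"
| "sat X (Disj f g) = (sat X f \<or> sat X g)"
| "sat X (Impl f g) = (sat X f \<longrightarrow> sat X g)"

definition sat_set :: "'a set \<Rightarrow> 'a form set \<Rightarrow> bool" where
  "sat_set X S = (\<forall>f\<in>S. sat X f)"

fun reduct :: "'a set \<Rightarrow> 'a form \<Rightarrow> 'a form" where
  "reduct X f =
     (if \<not> sat X f then Bot else
      (case f of
         Atom a \<Rightarrow> Atom a
       | Bot \<Rightarrow> Bot
       | Neg g \<Rightarrow> Neg (reduct X g)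
       | Conj g h \<Rightarrow> Conj (reduct X g) (reduct X h)
       | Disj g h \<Rightarrow> Disj (reduct X g) (reduct X h)
       | Impl g h \<Rightarrow> Impl (reduct X g) (reduct X h)))"

definition reduct_set :: "'a set \<Rightarrow> 'a form set \<Rightarrow> 'a form set" where
  "reduct_set X S = reduct X ` S"

definition stable_model :: "'a set \<Rightarrow> 'a form set \<Rightarrow> bool" where
  "stable_model X S =
     (sat_set X (reduct_set X S) \<and> (\<forall>Y. Y \<subset> X \<longrightarrow> \<not> sat_set Y (reduct_set X S)))"

definition classically_equivalent :: "'a form set \<Rightarrow> 'a form set \<Rightarrow> bool" where
  "classically_equivalent S T = (\<forall>Y. sat_set Y S \<longleftrightarrow> sat_set Y T)"

datatype weight = Soft real | Hard  \<comment> \<open>Hard = the symbol alpha\<close>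

text \<open>A program is a finite collection of weighted formulas (a multiset, so that
  the union of programs adds up repeated rules).\<close>
type_synonym 'a program = "(weight \<times> 'a form) multiset"

text \<open>w-expressions e^(c1 + c2 alpha) represented by the pair (c1, c2).\<close>
type_synonym wexpr = "real \<times> int"

definition wmult :: "wexpr \<Rightarrow> wexpr \<Rightarrow> wexpr" where
  "wmult a b = (fst a + fst b, snd a + snd b)"

definition wval :: "wexpr \<Rightarrow> real \<Rightarrow> real" where
  "wval e \<alpha> = exp (fst e + real_of_int (snd e) * \<alpha>)"

definition wexp_of :: "weight \<Rightarrow> wexpr" where
  "wexp_of w = (case w of Soft r \<Rightarrow> (r, 0) | Hard \<Rightarrow> (0, 1))"

definition TW :: "'a program \<Rightarrow> wexpr" where
  "TW F = (\<Sum>r\<in>#F. fst (wexp_of (fst r)), \<Sum>r\<in>#F. snd (wexp_of (fst r)))"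

definition sat_part :: "'a program \<Rightarrow> 'a set \<Rightarrow> 'a program" where
  "sat_part F X = filter_mset (\<lambda>r. sat X (snd r)) F"

definition unweighted :: "'a program \<Rightarrow> 'a form set" where
  "unweighted F = snd ` set_mset F"

definition SM :: "'a program \<Rightarrow> 'a set set" where
  "SM F = {X. stable_model X (unweighted (sat_part F X))}"

definition W :: "'a program \<Rightarrow> 'a set \<Rightarrow> real \<Rightarrow> real" where
  "W F X \<alpha> = (if X \<in> SM F then wval (TW (sat_part F X)) \<alpha> else 0)"

definition Prob :: "'a program \<Rightarrow> 'a set \<Rightarrow> real" where
  "Prob F X = Lim at_top (\<lambda>\<alpha>. W F X \<alpha> / (\<Sum>Y\<in>SM F. W F Y \<alpha>))"

definition strongly_equivalent :: "'a program \<Rightarrow> 'a program \<Rightarrow> bool" where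
  "strongly_equivalent F G = (\<forall>H X. Prob (F + H) X = Prob (G + H) X)"

end

theory Submission imports Defs begin

declare reduct.simps[simp del]

lemma reduct_Atom[simp]: "reduct X (Atom a) = (if a \<in> X then Atom a else Bot)"
  by (subst reduct.simps) auto
lemma reduct_Bot[simp]: "reduct X Bot = Bot"
  by (subst reduct.simps) auto
lemma reduct_Neg[simp]: "reduct X (Neg f) = (if sat X f then Bot else Neg (reduct X f))"
  by (subst reduct.simps) auto
lemma reduct_Conj[simp]: "reduct X (Conj f g) = (if sat X f \<and> sat X g then Conj (reduct X f) (reduct X g) else Bot)"
  by (subst reduct.simps) auto
lemma reduct_Disj[simp]: "reduct X (Disj f g) = (if sat X f \<or> sat X g then Disj (reduct X f) (reduct X g) else Bot)"
  by (subst reduct.simps) auto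
lemma reduct_Impl[simp]: "reduct X (Impl f g) = (if sat X f \<longrightarrow> sat X g then Impl (reduct X f) (reduct X g) else Bot)"
  by (subst reduct.simps) auto

lemma sat_reduct_imp: "sat Z (reduct X f) \<Longrightarrow> sat X f"
  by (cases "sat X f") (auto simp: reduct.simps)

lemma sat_reduct_self: "sat X f \<Longrightarrow> sat X (reduct X f)"
  by (induction f) (auto dest: sat_reduct_imp)

lemma sat_reduct_inter: "sat Z (reduct X f) \<longleftrightarrow> sat (Z \<inter> X) (reduct X f)"
  by (induction f) auto

lemma sat_foldr_Conj[simp]: "sat Z (foldr Conj fs (Neg Bot)) \<longleftrightarrow> (\<forall>f\<in>set fs. sat Z f)"
  by (induction fs) auto
lemma sat_foldr_Disj[simp]: "sat Z (foldr Disj fs Bot) \<longleftrightarrow> (\<exists>f\<in>set fs. sat Z f)"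
  by (induction fs) auto
definition conjL :: "'a form list \<Rightarrow> 'a form" where "conjL fs = foldr Conj fs (Neg Bot)"
definition disjL :: "'a form list \<Rightarrow> 'a form" where "disjL fs = foldr Disj fs Bot"

lemma sat_conjL[simp]: "sat Z (conjL fs) \<longleftrightarrow> (\<forall>f\<in>set fs. sat Z f)"
  unfolding conjL_def by simp
lemma sat_disjL[simp]: "sat Z (disjL fs) \<longleftrightarrow> (\<exists>f\<in>set fs. sat Z f)"
  unfolding disjL_def by simp
lemma sat_reduct_conjL[simp]: "sat Z (reduct X (conjL fs)) \<longleftrightarrow> (\<forall>f\<in>set fs. sat X f) \<and> (\<forall>f\<in>set fs. sat Z (reduct X f))"
  unfolding conjL_def by (induction fs) auto
lemma sat_reduct_disjL[simp]: "sat Z (reduct X (disjL fs)) \<longleftrightarrow> (\<exists>f\<in>set fs. sat Z (reduct X f))"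
  unfolding disjL_def by (induction fs) (auto dest: sat_reduct_imp)

lemma sat_set_Un[simp]: "sat_set Z (A \<union> B) \<longleftrightarrow> sat_set Z A \<and> sat_set Z B"
  by (auto simp: sat_set_def)
lemma reduct_set_Un[simp]: "reduct_set X (A \<union> B) = reduct_set X A \<union> reduct_set X B"
  by (auto simp: reduct_set_def)
lemma sat_part_plus[simp]: "sat_part (A + B) X = sat_part A X + sat_part B X"
  by (simp add: sat_part_def)
lemma unweighted_plus[simp]: "unweighted (A + B) = unweighted A \<union> unweighted B"
  by (simp add: unweighted_def image_Un)
lemma TW_plus: "TW (A + B) = wmult (TW A) (TW B)"
  by (simp add: TW_def wmult_def)
lemma wval_mult: "wval (wmult a b) x = wval a x * wval b x"
  by (simp add: wval_def wmult_def exp_add[symmetric] algebra_simps)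

lemma sat_set_self: "sat_set X (reduct_set X (unweighted (sat_part F X)))"
  by (auto simp: sat_set_def reduct_set_def unweighted_def sat_part_def intro: sat_reduct_self)

lemma TW_rep: "TW (replicate_mset K (Hard, f)) = (0, int K)"
  by (simp add: TW_def wexp_of_def)
lemma sat_part_rep: "sat_part (replicate_mset K r) X = (if sat X (snd r) then replicate_mset K r else {#})"
  by (induction K) (auto simp: sat_part_def)
lemma unweighted_rep: "unweighted (replicate_mset K r) = (if K = 0 then {} else {snd r})"
  by (simp add: unweighted_def)
lemma TW_empty[simp]: "TW {#} = (0,0)" by (simp add: TW_def)

lemma TW_snd_le: "snd (TW P) \<le> int (size P)" 
proof -
  have "snd (TW P) = (\<Sum>r\<in>#P. snd (wexp_of (fst r)))" by (simp add: TW_def)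
  also have "\<dots> \<le> (\<Sum>r\<in>#P. 1)" by (rule sum_mset_mono) (auto simp: wexp_of_def split: weight.splits)
  also have "\<dots> = int (size P)" by (induction P) auto
  finally show ?thesis .
qed
lemma TW_snd_ge: "0 \<le> snd (TW P)"
  unfolding TW_def by (induction P) (auto simp: wexp_of_def split: weight.splits)
lemma size_sat_part: "size (sat_part P X) \<le> size P"
  by (simp add: sat_part_def size_filter_mset_lesseq)


lemma exp_lin_zero:
  fixes k :: int and r :: real
  assumes "k < 0"
  shows "((\<lambda>x::real. exp (r + real_of_int k * x)) \<longlongrightarrow> 0) at_top"
proof (rule tendsto_sandwich[of "\<lambda>_. 0" _ _ "\<lambda>x. exp (r - x)"])
  show "\<forall>\<^sub>F x in at_top. 0 \<le> exp (r + real_of_int k * x)" by simp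
  have "k \<le> -1" using assms by simp
  hence "\<And>x::real. x \<ge> 0 \<Longrightarrow> r + real_of_int k * x \<le> r - x"
    by (metis add_le_cancel_left minus_mult_commute mult_1 mult_right_mono of_int_le_iff of_int_minus of_int_1 diff_conv_add_uminus)
  thus "\<forall>\<^sub>F x in at_top. exp (r + real_of_int k * x) \<le> exp (r - x)"
    by (auto intro!: eventually_at_top_linorderI[of 0])
  show "((\<lambda>_. 0) \<longlongrightarrow> (0::real)) at_top" by simp
  have "((\<lambda>x. exp r * exp (- x)) \<longlongrightarrow> exp r * 0) at_top"
    by (intro tendsto_mult tendsto_const filterlim_compose[OF exp_at_bot filterlim_uminus_at_bot_at_top])
  thus "((\<lambda>x. exp (r - x)) \<longlongrightarrow> 0) at_top" by (simp add: exp_diff exp_minus field_simps)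
qed



lemma finite_SM[simp]: "finite (SM (P :: ('a::finite) program))" by simp

lemma prob_notSM: "X \<notin> SM P \<Longrightarrow> Prob P X = 0"
  unfolding Prob_def W_def by (simp add: tendsto_Lim)

lemma prob_top:
  fixes P :: "('a::finite) program"
  assumes TS: "T \<subseteq> SM P" and Tne: "T \<noteq> {}"
    and top: "\<forall>Y\<in>T. snd (TW (sat_part P Y)) = M"
    and low: "\<forall>Y\<in>SM P - T. snd (TW (sat_part P Y)) < M"
  shows "Prob P X = (if X \<in> T then exp (fst (TW (sat_part P X))) / (\<Sum>Y\<in>T. exp (fst (TW (sat_part P Y)))) else 0)"
proof -
  define r where "r Y = fst (TW (sat_part P Y))" for Y
  define i where "i Y = snd (TW (sat_part P Y))" for Y
  define g where "g Y \<alpha> = W P Y \<alpha> * exp (- real_of_int M * \<alpha>)" for Y \<alpha>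
  define l where "l Y = (if Y \<in> T then exp (r Y) else 0)" for Y
  have gl: "(g Y \<longlongrightarrow> l Y) at_top" for Y
  proof (cases "Y \<in> SM P")
    case False
    with TS have "g Y = (\<lambda>_. 0)" "l Y = 0" by (auto simp: g_def W_def l_def)
    thus ?thesis by simp
  next
    case True
    have geq: "g Y = (\<lambda>\<alpha>. exp (r Y + real_of_int (i Y - M) * \<alpha>))"
      using True by (auto simp: g_def W_def wval_def r_def i_def algebra_simps exp_add[symmetric])
    show ?thesis
    proof (cases "Y \<in> T")
      case True
      hence "i Y = M" using top by (simp add: i_def)
      thus ?thesis using True by (simp add: geq l_def)
    next
      case False
      hence "i Y - M < 0" using low \<open>Y \<in> SM P\<close> by (simp add: i_def)
      thus ?thesis using False unfolding geq l_def by (simp only: exp_lin_zero if_False)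
    qed
  qed
  have sumT: "(\<Sum>Y\<in>SM P. l Y) = (\<Sum>Y\<in>T. exp (r Y))"
    using TS by (simp add: l_def sum.If_cases Int_absorb1 inf.absorb2)
  have pos: "(\<Sum>Y\<in>T. exp (r Y)) > 0"
    using Tne TS by (intro sum_pos) (auto intro: finite_subset)
  have lim: "((\<lambda>\<alpha>. g X \<alpha> / (\<Sum>Y\<in>SM P. g Y \<alpha>)) \<longlongrightarrow> l X / (\<Sum>Y\<in>T. exp (r Y))) at_top"
    using pos by (auto intro!: tendsto_divide tendsto_sum gl simp: sumT[symmetric])
  have eq: "(\<lambda>\<alpha>. W P X \<alpha> / (\<Sum>Y\<in>SM P. W P Y \<alpha>)) = (\<lambda>\<alpha>. g X \<alpha> / (\<Sum>Y\<in>SM P. g Y \<alpha>))"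
    by (rule ext) (simp add: g_def sum_distrib_right[symmetric])
  show ?thesis unfolding Prob_def eq using lim
    by (subst tendsto_Lim[OF _ lim]) (auto simp: l_def r_def)
qed



lemma sufficient:
  assumes A: "\<forall>X. TW (sat_part F X) = wmult c (TW (sat_part G X)) \<and>
        classically_equivalent (reduct_set X (unweighted (sat_part F X)))
                               (reduct_set X (unweighted (sat_part G X)))"
  shows "strongly_equivalent F G"
  unfolding strongly_equivalent_def
proof (intro allI)
  fix H X
  have SMeq: "SM (F + H) = SM (G + H)"
    using A unfolding SM_def stable_model_def classically_equivalent_def by auto
  have Weq: "W (F + H) Y \<alpha> = wval c \<alpha> * W (G + H) Y \<alpha>" for Y \<alpha>
    using A SMeq unfolding W_def by (simp add: TW_plus wval_mult)
  have "(\<lambda>\<alpha>. W (F + H) X \<alpha> / (\<Sum>Y\<in>SM (F + H). W (F + H) Y \<alpha>)) =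
        (\<lambda>\<alpha>. W (G + H) X \<alpha> / (\<Sum>Y\<in>SM (G + H). W (G + H) Y \<alpha>))"
  proof
    fix \<alpha>
    have "wval c \<alpha> > 0" by (simp add: wval_def)
    thus "W (F + H) X \<alpha> / (\<Sum>Y\<in>SM (F + H). W (F + H) Y \<alpha>) =
        W (G + H) X \<alpha> / (\<Sum>Y\<in>SM (G + H). W (G + H) Y \<alpha>)"
      by (simp add: Weq SMeq sum_distrib_left[symmetric])
  qed
  thus "Prob (F + H) X = Prob (G + H) X" by (simp add: Prob_def)
qed



lemma se_sym: "strongly_equivalent F G \<Longrightarrow> strongly_equivalent G F"
  unfolding strongly_equivalent_def by metis

lemma sat_part_plusH:
  "sat_part (P + replicate_mset K (Hard, \<psi>)) Z =
     sat_part P Z + (if sat Z \<psi> then replicate_mset K (Hard, \<psi>) else {#})"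
  by (simp add: sat_part_rep)

lemma reduct_half:
  fixes F G :: "('a::finite) program"
  assumes SE: "strongly_equivalent F G" and YX: "Y \<subset> X"
    and gY: "sat_set Y (reduct_set X (unweighted (sat_part G X)))"
  shows "sat_set Y (reduct_set X (unweighted (sat_part F X)))"
proof (rule ccontr)
  assume nf: "\<not> ?thesis"
  obtain ys where ys: "set ys = Y" using finite_list[of Y] by auto
  obtain ns where ns: "set ns = - X" using finite_list[of "- X"] by auto
  obtain ds where ds: "set ds = X - Y" using finite_list[of "X - Y"] by auto
  obtain a0 where a0: "a0 \<in> X - Y" using YX by auto
  define \<psi> where "\<psi> = conjL [conjL (map Atom ys), conjL (map (\<lambda>a. Neg (Atom a)) ns),
     Impl (disjL (map Atom ds)) (conjL (map Atom ds)), Neg (Neg (Atom a0))]"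
  have s\<psi>: "sat Z \<psi> \<longleftrightarrow> Z = X" for Z
  proof
    assume "sat Z \<psi>"
    hence "Y \<subseteq> Z" "Z \<subseteq> X" "a0 \<in> Z" "(\<exists>d\<in>X-Y. d \<in> Z) \<longrightarrow> X - Y \<subseteq> Z"
      by (auto simp: \<psi>_def ys ns ds)
    thus "Z = X" using a0 by blast
  next
    assume "Z = X" thus "sat Z \<psi>" using YX a0 by (auto simp: \<psi>_def ys ns ds)
  qed
  have r\<psi>: "Z \<subset> X \<Longrightarrow> sat Z (reduct X \<psi>) \<longleftrightarrow> Z = Y" for Z
  proof
    assume Z: "Z \<subset> X" and "sat Z (reduct X \<psi>)"
    hence "Y \<subseteq> Z" "(\<exists>d\<in>X-Y. d \<in> Z) \<longrightarrow> X - Y \<subseteq> Z"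
      using YX a0 by (auto simp: \<psi>_def ys ns ds)
    thus "Z = Y" using Z by blast
  next
    assume "Z = Y" thus "sat Z (reduct X \<psi>)" using YX a0 by (auto simp: \<psi>_def ys ns ds)
  qed
  define K where "K = size F + size G + 1"
  define H where "H = replicate_mset K (Hard, \<psi>)"
  have Kpos: "K \<noteq> 0" by (simp add: K_def)
  have uw: "unweighted (sat_part (P + H) X) = unweighted (sat_part P X) \<union> {\<psi>}" for P :: "'a program"
    using s\<psi>[of X] Kpos unfolding H_def sat_part_plusH by (simp add: unweighted_rep)
  have stab: "X \<in> SM (P + H) \<longleftrightarrow> \<not> sat_set Y (reduct_set X (unweighted (sat_part P X)))" for P
  proof -
    have "X \<in> SM (P + H) \<longleftrightarrow> (\<forall>Z. Z \<subset> X \<longrightarrow> \<not> (sat_set Z (reduct_set X (unweighted (sat_part P X))) \<and> sat Z (reduct X \<psi>)))"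
    proof -
      have e: "sat_set Z (reduct_set X (unweighted (sat_part (P + H) X))) \<longleftrightarrow>
          sat_set Z (reduct_set X (unweighted (sat_part P X))) \<and> sat Z (reduct X \<psi>)" for Z
        unfolding uw by (simp add: reduct_set_def sat_set_def conj_commute)
      have x1: "sat_set X (reduct_set X (unweighted (sat_part P X)))" by (rule sat_set_self)
      have x2: "sat X (reduct X \<psi>)" using s\<psi>[of X] sat_reduct_self[of X \<psi>] by simp
      have "X \<in> SM (P + H) \<longleftrightarrow> stable_model X (unweighted (sat_part (P + H) X))"
        by (simp add: SM_def)
      also have "\<dots> \<longleftrightarrow> (\<forall>Z. Z \<subset> X \<longrightarrow> \<not> (sat_set Z (reduct_set X (unweighted (sat_part P X))) \<and> sat Z (reduct X \<psi>)))"
        unfolding stable_model_def e using x1 x2 by simp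
      finally show ?thesis .
    qed
    also have "\<dots> \<longleftrightarrow> \<not> sat_set Y (reduct_set X (unweighted (sat_part P X)))"
      using r\<psi> YX by blast
    finally show ?thesis .
  qed
  have "Prob (G + H) X = 0" using stab[of G] gY by (simp add: prob_notSM)
  moreover have "Prob (F + H) X = 1"
  proof -
    have TWX: "TW (sat_part (F + H) X) = wmult (TW (sat_part F X)) (0, int K)"
      using s\<psi>[of X] by (simp add: H_def sat_part_rep TW_plus TW_rep)
    have "Prob (F + H) X = (if X \<in> {X} then exp (fst (TW (sat_part (F+H) X))) / (\<Sum>Y\<in>{X}. exp (fst (TW (sat_part (F+H) Y)))) else 0)"
    proof (rule prob_top[where M = "snd (TW (sat_part F X)) + int K"])
      show "{X} \<subseteq> SM (F + H)" using stab[of F] nf by simp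
      show "\<forall>Y\<in>{X}. snd (TW (sat_part (F + H) Y)) = snd (TW (sat_part F X)) + int K"
        using TWX by (simp add: wmult_def)
      show "\<forall>Y\<in>SM (F + H) - {X}. snd (TW (sat_part (F + H) Y)) < snd (TW (sat_part F X)) + int K"
      proof
        fix Z assume "Z \<in> SM (F + H) - {X}"
        hence "TW (sat_part (F + H) Z) = TW (sat_part F Z)"
          using s\<psi>[of Z] by (simp add: H_def sat_part_rep TW_plus wmult_def)
        moreover have "snd (TW (sat_part F Z)) \<le> int (size F)"
          using TW_snd_le[of "sat_part F Z"] size_sat_part[of F Z] by linarith
        moreover have "0 \<le> snd (TW (sat_part F X))" by (rule TW_snd_ge)
        ultimately show "snd (TW (sat_part (F + H) Z)) < snd (TW (sat_part F X)) + int K"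
          by (simp add: K_def)
      qed
    qed simp
    thus ?thesis by simp
  qed
  moreover have "Prob (F + H) X = Prob (G + H) X" using SE by (simp add: strongly_equivalent_def)
  ultimately show False by simp
qed

lemma sat_set_reduct_inter: "sat_set Z (reduct_set X S) \<longleftrightarrow> sat_set (Z \<inter> X) (reduct_set X S)"
  unfolding sat_set_def reduct_set_def using sat_reduct_inter by blast

lemma reduct_equiv:
  fixes F G :: "('a::finite) program"
  assumes SE: "strongly_equivalent F G"
  shows "classically_equivalent (reduct_set X (unweighted (sat_part F X)))
                               (reduct_set X (unweighted (sat_part G X)))"
  unfolding classically_equivalent_def
proof
  fix Z
  show "sat_set Z (reduct_set X (unweighted (sat_part F X))) \<longleftrightarrow> sat_set Z (reduct_set X (unweighted (sat_part G X)))"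
  proof (cases "Z \<inter> X = X")
    case True thus ?thesis by (simp only: sat_set_reduct_inter[of Z] True sat_set_self)
  next
    case False
    hence "Z \<inter> X \<subset> X" by blast
    thus ?thesis using reduct_half[OF SE, of "Z \<inter> X" X] reduct_half[OF se_sym[OF SE], of "Z \<inter> X" X]
      by (simp only: sat_set_reduct_inter[of Z]) blast
  qed
qed



lemma two_model:
  fixes P :: "('a::finite) program"
  assumes XX: "X \<noteq> X'" and S: "X \<in> SM P" "X' \<in> SM P"
    and low: "\<forall>Z\<in>SM P - {X, X'}. snd (TW (sat_part P Z)) < snd (TW (sat_part P X)) \<and>
                                      snd (TW (sat_part P Z)) < snd (TW (sat_part P X'))"
  shows "Prob P X = (if snd (TW (sat_part P X)) = snd (TW (sat_part P X'))
           then exp (fst (TW (sat_part P X))) / (exp (fst (TW (sat_part P X))) + exp (fst (TW (sat_part P X'))))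
           else if snd (TW (sat_part P X)) > snd (TW (sat_part P X')) then 1 else 0)"
proof -
  let ?i = "\<lambda>Z. snd (TW (sat_part P Z))"
  let ?r = "\<lambda>Z. fst (TW (sat_part P Z))"
  consider "?i X = ?i X'" | "?i X > ?i X'" | "?i X < ?i X'" by linarith
  thus ?thesis
  proof cases
    case 1
    have "Prob P X = (if X \<in> {X, X'} then exp (?r X) / (\<Sum>Y\<in>{X,X'}. exp (?r Y)) else 0)"
      by (rule prob_top[where M = "?i X"]) (use S low 1 in auto)
    thus ?thesis using 1 XX by simp
  next
    case 2
    have "Prob P X = (if X \<in> {X} then exp (?r X) / (\<Sum>Y\<in>{X}. exp (?r Y)) else 0)"
      by (rule prob_top[where M = "?i X"]) (use S low 2 in auto)
    thus ?thesis using 2 by simp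
  next
    case 3
    have "Prob P X = (if X \<in> {X'} then exp (?r X) / (\<Sum>Y\<in>{X'}. exp (?r Y)) else 0)"
      by (rule prob_top[where M = "?i X'"]) (use S low 3 XX in auto)
    thus ?thesis using 3 XX by simp
  qed
qed

lemma in_SM_witness:
  assumes "f \<in> unweighted (sat_part P X)" and "\<forall>Z. Z \<subset> X \<longrightarrow> \<not> sat Z (reduct X f)"
  shows "X \<in> SM P"
  using assms sat_set_self[of X P] unfolding SM_def stable_model_def sat_set_def reduct_set_def
  by auto



lemma sat_conjL_map: "sat Z (conjL (map g xs)) \<longleftrightarrow> (\<forall>a\<in>set xs. sat Z (g a))"
  by (induction xs) (auto simp: conjL_def)
lemma sat_reduct_conjL_map: "sat Z (reduct X (conjL (map g xs))) \<longleftrightarrow> (\<forall>a\<in>set xs. sat X (g a) \<and> sat Z (reduct X (g a)))"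
  by (induction xs) (auto simp: conjL_def)

lemma frac_inj:
  fixes a b c d :: real
  assumes "exp a / (exp a + exp b) = exp c / (exp c + exp d)"
  shows "a - b = c - d"
proof -
  have p: "exp a + exp b > 0" "exp c + exp d > 0" by (simp_all add: add_pos_pos)
  hence "exp a * (exp c + exp d) = exp c * (exp a + exp b)" using assms by (simp add: field_simps)
  hence "exp a * exp d = exp c * exp b" by (simp add: algebra_simps)
  hence "exp (a + d) = exp (c + b)" by (simp add: exp_add)
  thus ?thesis by simp
qed

lemma weight_diff:
  fixes F G :: "('a::finite) program"
  assumes SE: "strongly_equivalent F G" and XX: "X \<noteq> X'"
  shows "fst (TW (sat_part F X)) - fst (TW (sat_part F X')) = fst (TW (sat_part G X)) - fst (TW (sat_part G X'))
       \<and> snd (TW (sat_part F X)) - snd (TW (sat_part F X')) = snd (TW (sat_part G X)) - snd (TW (sat_part G X'))"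
proof -
  obtain us where us: "set us = (UNIV :: 'a set)" using finite_list[of "UNIV::'a set"] by auto
  define chi where "chi V = conjL (map (\<lambda>a. if a \<in> V then Atom a else Neg (Atom a)) us)" for V
  have schi: "sat Z (chi V) \<longleftrightarrow> Z = V" for Z V
    unfolding chi_def sat_conjL_map us by auto
  have rchi: "sat Z (reduct V (chi V)) \<longleftrightarrow> V \<subseteq> Z" for Z V
    unfolding chi_def sat_reduct_conjL_map us by auto
  define B where "B = Disj (chi X) (chi X')"
  have sB: "sat Z B \<longleftrightarrow> Z = X \<or> Z = X'" for Z by (simp add: B_def schi)
  have rB: "\<not> sat Z (reduct V B)" if "Z \<subset> V" "V = X \<or> V = X'" for Z V
  proof
    assume a: "sat Z (reduct V B)"
    have "sat V B" using sB that(2) by auto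
    hence "sat Z (reduct V (chi X)) \<or> sat Z (reduct V (chi X'))" using a by (simp add: B_def)
    thus False
    proof
      assume h: "sat Z (reduct V (chi X))"
      hence "V = X" using sat_reduct_imp[OF h] schi by simp
      with h rchi that(1) show False by blast
    next
      assume h: "sat Z (reduct V (chi X'))"
      hence "V = X'" using sat_reduct_imp[OF h] schi by simp
      with h rchi that(1) show False by blast
    qed
  qed
  define d where "d = snd (TW (sat_part F X')) - snd (TW (sat_part F X))"
  define m where "m = nat d"
  define m' where "m' = nat (- d)"
  define K where "K = size F + size G + 1"
  have Kpos: "K \<noteq> 0" by (simp add: K_def)
  define H where "H = replicate_mset K (Hard, B) + replicate_mset m (Hard, Neg (Neg (chi X)))
     + replicate_mset m' (Hard, Neg (Neg (chi X')))"
  have TWH: "TW (sat_part H Z) = (if Z = X then (0, int K + int m) else if Z = X' then (0, int K + int m') else (0,0))" for Z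
    using XX by (auto simp: H_def sat_part_rep TW_plus TW_rep sB schi wmult_def)
  have BH: "B \<in> unweighted (sat_part (P + H) V)" if "V = X \<or> V = X'" for P V
    using that Kpos by (auto simp: H_def sat_part_rep sB unweighted_def)
  have SMH: "X \<in> SM (P + H)" "X' \<in> SM (P + H)" for P
  proof -
    show "X \<in> SM (P + H)" by (rule in_SM_witness[OF BH[of X P]]) (use rB in auto)
    show "X' \<in> SM (P + H)" by (rule in_SM_witness[OF BH[of X' P]]) (use rB in auto)
  qed
  have TWPH: "TW (sat_part (P + H) Z) = wmult (TW (sat_part P Z)) (TW (sat_part H Z))" for P Z
    by (simp add: TW_plus)
  have probH: "Prob (P + H) X = (if snd (TW (sat_part P X)) + int m = snd (TW (sat_part P X')) + int m'
           then exp (fst (TW (sat_part P X))) / (exp (fst (TW (sat_part P X))) + exp (fst (TW (sat_part P X'))))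
           else if snd (TW (sat_part P X)) + int m > snd (TW (sat_part P X')) + int m' then 1 else 0)"
    if sz: "size P < K" for P
  proof -
    have low: "\<forall>Z\<in>SM (P + H) - {X, X'}. snd (TW (sat_part (P + H) Z)) < snd (TW (sat_part (P + H) X)) \<and>
                                      snd (TW (sat_part (P + H) Z)) < snd (TW (sat_part (P + H) X'))"
    proof
      fix Z assume Z: "Z \<in> SM (P + H) - {X, X'}"
      have "snd (TW (sat_part P Z)) \<le> int (size P)"
        using TW_snd_le[of "sat_part P Z"] size_sat_part[of P Z] by linarith
      moreover have "0 \<le> snd (TW (sat_part P X))" "0 \<le> snd (TW (sat_part P X'))" by (rule TW_snd_ge)+
      ultimately show "snd (TW (sat_part (P + H) Z)) < snd (TW (sat_part (P + H) X)) \<and>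
                       snd (TW (sat_part (P + H) Z)) < snd (TW (sat_part (P + H) X'))"
        using Z sz XX by (simp only: TWPH TWH) (simp add: wmult_def)
    qed
    show ?thesis using two_model[OF XX SMH low] XX by (simp only: TWPH TWH) (simp add: wmult_def)
  qed
  let ?iF = "\<lambda>Z. snd (TW (sat_part F Z))" and ?iG = "\<lambda>Z. snd (TW (sat_part G Z))"
  let ?rF = "\<lambda>Z. fst (TW (sat_part F Z))" and ?rG = "\<lambda>Z. fst (TW (sat_part G Z))"
  have mm: "int m - int m' = d" by (simp add: m_def m'_def)
  have eqF: "?iF X + int m = ?iF X' + int m'" using mm by (simp add: d_def)
  have PF: "Prob (F + H) X = exp (?rF X) / (exp (?rF X) + exp (?rF X'))"
    using probH[of F] eqF by (simp add: K_def)
  have PG: "Prob (G + H) X = (if ?iG X + int m = ?iG X' + int m'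
           then exp (?rG X) / (exp (?rG X) + exp (?rG X'))
           else if ?iG X + int m > ?iG X' + int m' then 1 else 0)"
    using probH[of G] by (simp add: K_def)
  have PFG: "Prob (F + H) X = Prob (G + H) X" using SE by (simp add: strongly_equivalent_def)
  have lt1: "exp (?rF X) / (exp (?rF X) + exp (?rF X')) < 1" by (simp add: add_pos_pos)
  have gt0: "exp (?rF X) / (exp (?rF X) + exp (?rF X')) > 0" by (simp add: add_pos_pos)
  have eqG: "?iG X + int m = ?iG X' + int m'"
  proof (rule ccontr)
    assume "\<not> ?thesis"
    thus False using PF PG PFG lt1 gt0 by (auto split: if_splits)
  qed
  have "exp (?rF X) / (exp (?rF X) + exp (?rF X')) = exp (?rG X) / (exp (?rG X) + exp (?rG X'))"
    using PF PG PFG eqG by simp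
  hence "?rF X - ?rF X' = ?rG X - ?rG X'" by (rule frac_inj)
  moreover have "?iF X - ?iF X' = ?iG X - ?iG X'" using eqF eqG by linarith
  ultimately show ?thesis by simp
qed



theorem theorem1:
  fixes F G :: "('a::finite) program"
  shows "strongly_equivalent F G \<longleftrightarrow>
    (\<exists>c :: wexpr. \<forall>X :: 'a set.
        TW (sat_part F X) = wmult c (TW (sat_part G X)) \<and>
        classically_equivalent (reduct_set X (unweighted (sat_part F X)))
                               (reduct_set X (unweighted (sat_part G X))))"
proof
  assume SE: "strongly_equivalent F G"
  define c where "c = (fst (TW (sat_part F {})) - fst (TW (sat_part G {})),
                       snd (TW (sat_part F {})) - snd (TW (sat_part G {})))"
  have "TW (sat_part F X) = wmult c (TW (sat_part G X))" for X
  proof (cases "X = {}")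
    case True thus ?thesis by (simp add: c_def wmult_def prod_eq_iff)
  next
    case False
    from weight_diff[OF SE False] show ?thesis
      by (simp add: c_def wmult_def prod_eq_iff algebra_simps)
  qed
  thus "\<exists>c :: wexpr. \<forall>X :: 'a set.
        TW (sat_part F X) = wmult c (TW (sat_part G X)) \<and>
        classically_equivalent (reduct_set X (unweighted (sat_part F X)))
                               (reduct_set X (unweighted (sat_part G X)))"
    using reduct_equiv[OF SE] by blast
next
  assume "\<exists>c :: wexpr. \<forall>X :: 'a set.
        TW (sat_part F X) = wmult c (TW (sat_part G X)) \<and>
        classically_equivalent (reduct_set X (unweighted (sat_part F X)))
                               (reduct_set X (unweighted (sat_part G X)))"
  then obtain c where "\<forall>X :: 'a set.
        TW (sat_part F X) = wmult c (TW (sat_part G X)) \<and>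
        classically_equivalent (reduct_set X (unweighted (sat_part F X)))
                               (reduct_set X (unweighted (sat_part G X)))" by blast
  thus "strongly_equivalent F G" by (rule sufficient)
qed

end
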